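(* Let $\mathcal{I}$ be a distributive interval hypergraph on $[n]$, $A$ an acyclic orientation of $\mathcal{I}$, and $J\in\mathcal{I}$ with $j=A(J)\ne\min(J)$. Then there exists $i$ with \[ \min(J)\le i\le\max\{\max(I): I\in\mathcal{I},\ \min(I)=\min(J),\ \max(I)<j\} \] such that the orientation $B$ obtained from $A$ by flipping $j$ to $i$ (i.e. $B(H)=i$ if $A(H)=j$ and $i\in H$, and $B(H)=A(H)$ otherwise) is acyclic.
   Context: An interval hypergraph $\mathcal{I}$ on $[n]$ is a collection of intervals of $[n]$ containing all singletons. It is distributive if for all $I,J\in\mathcal{I}$ with $I\not\subseteq J$, $I\not\supseteq J$ and $I\cap J\ne\varnothing$, the intersection $I\cap J$ is in $\mathcal{I}$ and is initial or final (i.e. shares its minimum or its maximum) in every $K\in\mathcal{I}$ with $I\cap J\subseteq K$. An orientation is a map $O:\mathcal{I}\to[n]$ with $O(I)\in I$; it is acyclic if there are no $H_1,\dots,H_k$, $k\ge2$, with $O(H_{i+1})\in H_i\setminus\{O(H_i)\}$ for $i\in[k-1]$ and $O(H_1)\in H_k\setminus\{O(H_k)\}$. *)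

theory Defs
  imports Main
begin

definition is_interval :: "nat \<Rightarrow> nat set \<Rightarrow> bool" where
  "is_interval n I \<longleftrightarrow> (\<exists>a b. 1 \<le> a \<and> a \<le> b \<and> b \<le> n \<and> I = {a..b})"

definition interval_hypergraph :: "nat \<Rightarrow> nat set set \<Rightarrow> bool" where
  "interval_hypergraph n \<I> \<longleftrightarrow>
     (\<forall>I\<in>\<I>. is_interval n I) \<and> (\<forall>k\<in>{1..n}. {k} \<in> \<I>)"

definition initial_or_final :: "nat set \<Rightarrow> nat set \<Rightarrow> bool" where
  "initial_or_final X K \<longleftrightarrow> Min X = Min K \<or> Max X = Max K"

definition distributive :: "nat \<Rightarrow> nat set set \<Rightarrow> bool" where
  "distributive n \<I> \<longleftrightarrow> interval_hypergraph n \<I> \<and>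
     (\<forall>I\<in>\<I>. \<forall>J\<in>\<I>. \<not> I \<subseteq> J \<and> \<not> J \<subseteq> I \<and> I \<inter> J \<noteq> {} \<longrightarrow>
        I \<inter> J \<in> \<I> \<and> (\<forall>K\<in>\<I>. I \<inter> J \<subseteq> K \<longrightarrow> initial_or_final (I \<inter> J) K))"

definition orientation :: "nat set set \<Rightarrow> (nat set \<Rightarrow> nat) \<Rightarrow> bool" where
  "orientation \<I> Or \<longleftrightarrow> (\<forall>I\<in>\<I>. Or I \<in> I)"

definition acyclic_orientation :: "nat set set \<Rightarrow> (nat set \<Rightarrow> nat) \<Rightarrow> bool" where
  "acyclic_orientation \<I> Or \<longleftrightarrow> orientation \<I> Or \<and>
     \<not> (\<exists>k (Hs :: nat \<Rightarrow> nat set). k \<ge> 2 \<and> (\<forall>i<k. Hs i \<in> \<I>) \<and>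
          (\<forall>i<k. Or (Hs ((i + 1) mod k)) \<in> Hs i - {Or (Hs i)}))"

definition flip :: "(nat set \<Rightarrow> nat) \<Rightarrow> nat \<Rightarrow> nat \<Rightarrow> nat set \<Rightarrow> nat" where
  "flip A j i = (\<lambda>H. if A H = j \<and> i \<in> H then i else A H)"

end

theory Submission
  imports Defs
begin

definition arc :: "nat set set \<Rightarrow> (nat set \<Rightarrow> nat) \<Rightarrow> nat \<Rightarrow> nat \<Rightarrow> bool" where
  "arc \<I> Or u v \<longleftrightarrow> (\<exists>G\<in>\<I>. u \<in> G \<and> Or G = v \<and> u \<noteq> v)"

lemma arc_path:
  assumes "(arc \<I> Or)\<^sup>+\<^sup>+ x z"
  shows "\<exists>(k::nat) Hs. k \<ge> 1 \<and> (\<forall>i<k. Hs i \<in> \<I>) \<and> Or (Hs 0) = z \<and> x \<in> Hs (k-1) \<and> x \<noteq> Or (Hs (k-1))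
     \<and> (\<forall>i. i+1 < k \<longrightarrow> Or (Hs (i+1)) \<in> Hs i \<and> Or (Hs (i+1)) \<noteq> Or (Hs i))"
  using assms
proof (induction rule: tranclp_induct)
  case (base y)
  then obtain G where "G \<in> \<I>" "x \<in> G" "Or G = y" "x \<noteq> y" unfolding arc_def by blast
  show ?case apply (rule exI[where x="1::nat"]) apply (rule exI[where x="\<lambda>_::nat. G"]) using \<open>G \<in> \<I>\<close> \<open>x \<in> G\<close> \<open>Or G = y\<close> \<open>x \<noteq> y\<close> by auto
next
  case (step y z)
  then obtain k :: nat and Hs where H: "k \<ge> 1" "\<forall>i<k. Hs i \<in> \<I>" "Or (Hs 0) = y" "x \<in> Hs (k-1)" "x \<noteq> Or (Hs (k-1))"
     "\<forall>i. i+1 < k \<longrightarrow> Or (Hs (i+1)) \<in> Hs i \<and> Or (Hs (i+1)) \<noteq> Or (Hs i)" by blast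
  from step obtain G where G: "G \<in> \<I>" "y \<in> G" "Or G = z" "y \<noteq> z" unfolding arc_def by blast
  define Hs' where "Hs' = (\<lambda>i. if i = 0 then G else Hs (i-1))"
  have "k+1 \<ge> 1" by simp
  moreover have "\<forall>i<k+1. Hs' i \<in> \<I>" using H G by (auto simp: Hs'_def)
  moreover have "Or (Hs' 0) = z" using G by (simp add: Hs'_def)
  moreover have "x \<in> Hs' (k+1-1) \<and> x \<noteq> Or (Hs' (k+1-1))" using H by (auto simp: Hs'_def)
  moreover have "\<forall>i. i+1 < k+1 \<longrightarrow> Or (Hs' (i+1)) \<in> Hs' i \<and> Or (Hs' (i+1)) \<noteq> Or (Hs' i)"
  proof (intro allI impI)
    fix i assume i: "i+1 < k+1"
    show "Or (Hs' (i+1)) \<in> Hs' i \<and> Or (Hs' (i+1)) \<noteq> Or (Hs' i)"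
    proof (cases i)
      case 0 then show ?thesis using H G by (simp add: Hs'_def)
    next
      case (Suc i') then show ?thesis using H(6)[rule_format, of i'] i by (simp add: Hs'_def)
    qed
  qed
  ultimately show ?case by blast
qed

lemma acyc_no_cycle:
  assumes "acyclic_orientation \<I> Or"
  shows "\<not> (arc \<I> Or)\<^sup>+\<^sup>+ x x"
proof
  assume "(arc \<I> Or)\<^sup>+\<^sup>+ x x"
  from arc_path[OF this] obtain k :: nat and Hs where H: "k \<ge> 1" "\<forall>i<k. Hs i \<in> \<I>" "Or (Hs 0) = x" "x \<in> Hs (k-1)" "x \<noteq> Or (Hs (k-1))"
     "\<forall>i. i+1 < k \<longrightarrow> Or (Hs (i+1)) \<in> Hs i \<and> Or (Hs (i+1)) \<noteq> Or (Hs i)" by blast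
  have k2: "k \<ge> 2"
  proof (rule ccontr)
    assume "\<not> k \<ge> 2" then have "k = 1" using H(1) by simp
    then show False using H(3,5) by simp
  qed
  have "\<forall>i<k. Or (Hs ((i + 1) mod k)) \<in> Hs i - {Or (Hs i)}"
  proof (intro allI impI)
    fix i assume i: "i < k"
    show "Or (Hs ((i + 1) mod k)) \<in> Hs i - {Or (Hs i)}"
    proof (cases "i + 1 < k")
      case True then show ?thesis using H(6) by simp
    next
      case False then have "i = k - 1" "i+1 = k" using i by auto
      then have "(i+1) mod k = 0" by simp
      then show ?thesis using H \<open>i = k - 1\<close> by simp
    qed
  qed
  then show False using assms k2 H(2) unfolding acyclic_orientation_def by blast
qed

lemma no_cycle_acyc:
  assumes "orientation \<I> Or" and "\<And>x. \<not> (arc \<I> Or)\<^sup>+\<^sup>+ x x"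
  shows "acyclic_orientation \<I> Or"
  unfolding acyclic_orientation_def
proof (intro conjI assms(1) notI)
  assume "\<exists>k (Hs :: nat \<Rightarrow> nat set). k \<ge> 2 \<and> (\<forall>i<k. Hs i \<in> \<I>) \<and>
          (\<forall>i<k. Or (Hs ((i + 1) mod k)) \<in> Hs i - {Or (Hs i)})"
  then obtain k and Hs :: "nat \<Rightarrow> nat set" where k: "k \<ge> 2" and Hs: "\<forall>i<k. Hs i \<in> \<I>"
    and C: "\<forall>i<k. Or (Hs ((i + 1) mod k)) \<in> Hs i - {Or (Hs i)}" by blast
  define w where "w i = Or (Hs i)" for i
  have ar: "arc \<I> Or (w ((i+1) mod k)) (w i)" if "i < k" for i
    using C Hs that unfolding arc_def w_def by blast
  have "(arc \<I> Or)\<^sup>+\<^sup>+ (w m) (w 0)" if "1 \<le> m" "m < k" for m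
    using that
  proof (induction m)
    case 0 then show ?case by simp
  next
    case (Suc m)
    show ?case
    proof (cases "m = 0")
      case True
      then show ?thesis using ar[of 0] k by simp
    next
      case False
      then have "(arc \<I> Or)\<^sup>+\<^sup>+ (w m) (w 0)" using Suc by simp
      moreover have "arc \<I> Or (w (Suc m)) (w m)" using ar[of m] Suc.prems by simp
      ultimately show ?thesis by (meson tranclp_into_tranclp2)
    qed
  qed
  then have "(arc \<I> Or)\<^sup>+\<^sup>+ (w (k-1)) (w 0)" using k by simp
  moreover have "arc \<I> Or (w 0) (w (k-1))" using ar[of "k-1"] k by simp
  ultimately show False using assms(2) by (meson tranclp_into_tranclp2)
qed


lemma MinMax_ivl: "(a::nat) \<le> b \<Longrightarrow> Min {a..b} = a \<and> Max {a..b} = b"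
  by (auto intro: Min_eqI Max_eqI)

lemma interval_repr:
  assumes "interval_hypergraph n \<I>" "I \<in> \<I>"
  shows "I = {Min I..Max I} \<and> 1 \<le> Min I \<and> Min I \<le> Max I \<and> Max I \<le> n"
proof -
  obtain a b where "1 \<le> a" "a \<le> b" "b \<le> n" "I = {a..b}"
    using assms unfolding interval_hypergraph_def is_interval_def by blast
  then show ?thesis using MinMax_ivl[of a b] by simp
qed

theorem proposition5p23:
  fixes n :: nat and \<I> :: "nat set set" and A :: "nat set \<Rightarrow> nat" and J :: "nat set"
  assumes "distributive n \<I>"
    and "acyclic_orientation \<I> A"
    and "J \<in> \<I>"
    and "A J \<noteq> Min J"
  shows "\<exists>i. Min J \<le> i \<and>
             i \<le> Max {Max I | I. I \<in> \<I> \<and> Min I = Min J \<and> Max I < A J} \<and>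
             acyclic_orientation \<I> (flip A (A J) i)"
proof -
  have IH: "interval_hypergraph n \<I>" using assms(1) unfolding distributive_def by blast
  have Dist: "\<And>I J. I\<in>\<I> \<Longrightarrow> J\<in>\<I> \<Longrightarrow> \<not> I \<subseteq> J \<Longrightarrow> \<not> J \<subseteq> I \<Longrightarrow> I \<inter> J \<noteq> {} \<Longrightarrow>
        I \<inter> J \<in> \<I> \<and> (\<forall>K\<in>\<I>. I \<inter> J \<subseteq> K \<longrightarrow> Min (I \<inter> J) = Min K \<or> Max (I \<inter> J) = Max K)"
    using assms(1) unfolding distributive_def initial_or_final_def by blast
  have ivl: "\<And>I. I \<in> \<I> \<Longrightarrow> I = {Min I..Max I} \<and> 1 \<le> Min I \<and> Min I \<le> Max I \<and> Max I \<le> n"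
    using interval_repr[OF IH] by blast
  have sing: "\<And>k. 1 \<le> k \<Longrightarrow> k \<le> n \<Longrightarrow> {k} \<in> \<I>" using IH unfolding interval_hypergraph_def by auto
  have orA: "\<And>G. G \<in> \<I> \<Longrightarrow> A G \<in> G" using assms(2) unfolding acyclic_orientation_def orientation_def by blast
  define a where "a = Min J"
  define b where "b = Max J"
  define j where "j = A J"
  have Jab: "J = {a..b}" "1 \<le> a" "a \<le> b" "b \<le> n" using ivl[OF assms(3)] unfolding a_def b_def by auto
  have "j \<in> J" using orA[OF assms(3)] j_def by simp
  then have "a \<le> j" "j \<le> b" using Jab(1) by auto
  moreover have "j \<noteq> a" using assms(4) unfolding j_def a_def by simp
  ultimately have aj: "a < j" "j \<le> b" by auto
  define M where "M = {Max I | I. I \<in> \<I> \<and> Min I = a \<and> Max I < j}"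
  have finM: "finite M"
  proof (rule finite_subset)
    show "M \<subseteq> {..n}" unfolding M_def using ivl by fastforce
  qed simp
  have "{a} \<in> \<I>" using sing Jab by simp
  then have "a \<in> M" unfolding M_def using aj by force
  define m where "m = Max M"
  have am: "a \<le> m" using finM \<open>a \<in> M\<close> m_def by simp
  have "m \<in> M" using finM \<open>a \<in> M\<close> m_def by (metis Max_in empty_iff)
  then obtain K0 where K0: "K0 \<in> \<I>" "Min K0 = a" "Max K0 = m" "m < j" unfolding M_def by blast
  have K0e: "K0 = {a..m}" using ivl[OF K0(1)] K0 by simp
  have Mbound: "\<And>d. {a..d} \<in> \<I> \<Longrightarrow> a \<le> d \<Longrightarrow> d < j \<Longrightarrow> d \<le> m"
  proof -
    fix d assume "{a..d} \<in> \<I>" "a \<le> d" "d < j"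
    then have "d \<in> M" unfolding M_def using MinMax_ivl[of a d] by force
    then show "d \<le> m" using finM m_def by simp
  qed
  define R where "R = arc \<I> A"
  have acycA: "\<And>x. \<not> R\<^sup>+\<^sup>+ x x" unfolding R_def using acyc_no_cycle[OF assms(2)] by blast
  define S where "S = {a..m}"
  define r where "r = {(u,v). u \<in> S \<and> v \<in> S \<and> R\<^sup>+\<^sup>+ v u}"
  have "trans r" unfolding r_def trans_def by (auto intro: tranclp_trans)
  then have "r\<^sup>+ = r" by simp
  then have "acyclic r" unfolding acyclic_def r_def using acycA by auto
  moreover have "finite r" by (rule finite_subset[of _ "S \<times> S"]) (auto simp: r_def S_def)
  ultimately have "wf r" by (simp add: finite_acyclic_wf)
  then obtain i where iS: "i \<in> S" and choice0: "\<And>y. (y, i) \<in> r \<Longrightarrow> y \<notin> S"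
    using wfE_min[of r a S] am S_def by auto
  have choice: "\<And>y. R\<^sup>+\<^sup>+ i y \<Longrightarrow> y \<notin> S" using choice0 iS unfolding r_def by blast
  have ai: "a \<le> i" "i \<le> m" using iS S_def by auto
  have iJ: "i \<in> J" using ai aj K0 Jab by auto
  have good: "\<not> R\<^sup>*\<^sup>* (A G) j" if G: "G \<in> \<I>" "i \<in> G" "A G \<noteq> i" "A G \<noteq> j" for G
  proof
    assume "R\<^sup>*\<^sup>* (A G) j"
    define y where "y = A G"
    have Ryj: "R\<^sup>+\<^sup>+ y j" using \<open>R\<^sup>*\<^sup>* (A G) j\<close> G(4) y_def by (metis rtranclpD)
    have Riy: "R i y" unfolding R_def arc_def y_def using G by blast
    have F1: "j \<notin> G"
    proof
      assume "j \<in> G"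
      then have "R j y" unfolding R_def arc_def y_def using G by blast
      then show False using Ryj acycA by (meson tranclp_into_tranclp2)
    qed
    have F2: "y \<notin> S" using choice Riy by blast
    define c where "c = Min G"
    define d where "d = Max G"
    have Gcd: "G = {c..d}" using ivl[OF G(1)] c_def d_def by simp
    have yG: "y \<in> G" using orA[OF G(1)] y_def by simp
    have ci: "c \<le> i" "i \<le> d" "c \<le> y" "y \<le> d" using Gcd G(2) yG by auto
    have dj: "d < j"
    proof (rule ccontr)
      assume "\<not> d < j"
      then have "j \<in> G" using Gcd ci ai K0(4) by auto
      then show False using F1 by simp
    qed
    show False
    proof (cases "y > m")
      case True
      show False
      proof (cases "c \<le> a")
        case True
        have "{a..d} \<in> \<I>"
        proof (cases "c = a")
          case True then show ?thesis using Gcd G(1) by simp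
        next
          case False
          have "\<not> G \<subseteq> J" using Gcd Jab False True ci by auto
          moreover have "\<not> J \<subseteq> G" using F1 \<open>j \<in> J\<close> by blast
          moreover have "G \<inter> J \<noteq> {}" using iJ G(2) by blast
          ultimately have "G \<inter> J \<in> \<I>" using Dist[OF G(1) assms(3)] by blast
          moreover have "G \<inter> J = {a..d}" using Gcd Jab True dj aj by auto
          ultimately show ?thesis by simp
        qed
        then have "d \<le> m" using Mbound ci ai dj by simp
        then show False using \<open>y > m\<close> ci by simp
      next
        case False
        have "\<not> G \<subseteq> K0" using K0e Gcd ci \<open>y > m\<close> by auto
        moreover have "\<not> K0 \<subseteq> G" using K0e Gcd False am by auto
        moreover have "G \<inter> K0 \<noteq> {}" using K0e G(2) ai by auto
        ultimately have X: "\<forall>K\<in>\<I>. G \<inter> K0 \<subseteq> K \<longrightarrow> Min (G \<inter> K0) = Min K \<or> Max (G \<inter> K0) = Max K"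
          using Dist[OF G(1) K0(1)] by blast
        have GK: "G \<inter> K0 = {c..m}" using Gcd K0e ci \<open>y > m\<close> False by auto
        have "{c..m} \<subseteq> J" using Jab False K0(4) aj by auto
        then have "Min {c..m} = a \<or> Max {c..m} = b" using X GK assms(3) a_def b_def by auto
        moreover have "Min {c..m} = c" "Max {c..m} = m" using MinMax_ivl[of c m] ci ai by auto
        ultimately show False using False K0(4) aj by auto
      qed
    next
      case False
      then have ya: "y < a" using F2 S_def by auto
      have "\<not> G \<subseteq> J" using Gcd Jab ya ci by auto
      moreover have "\<not> J \<subseteq> G" using F1 \<open>j \<in> J\<close> by blast
      moreover have "G \<inter> J \<noteq> {}" using iJ G(2) by blast
      ultimately have X: "G \<inter> J \<in> \<I> \<and> (\<forall>K\<in>\<I>. G \<inter> J \<subseteq> K \<longrightarrow> Min (G \<inter> J) = Min K \<or> Max (G \<inter> J) = Max K)"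
        using Dist[OF G(1) assms(3)] by blast
      have GJ: "G \<inter> J = {a..d}" using Gcd Jab ya ci dj aj by auto
      have ad: "a \<le> d" using ci ai by simp
      have dm: "d \<le> m" using Mbound X GJ ad dj by simp
      have MM: "Min {a..d} = a" "Max {a..d} = d" using MinMax_ivl[OF ad] by auto
      have stepw: "w < a" if hu: "u < a" "R u w" "R\<^sup>+\<^sup>+ i w" for u w
      proof (rule ccontr)
        assume "\<not> w < a"
        then have wm: "w > m" using choice[OF hu(3)] S_def by auto
        obtain G' where G': "G' \<in> \<I>" "u \<in> G'" "A G' = w" using hu(2) unfolding R_def arc_def by blast
        have "w \<in> G'" using orA[OF G'(1)] G' by simp
        have G'e: "G' = {Min G'..Max G'}" using ivl[OF G'(1)] by simp
        have "Min G' \<le> u" "w \<le> Max G'" using G'e G'(2) \<open>w \<in> G'\<close> by auto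
        then have "{a..d} \<subseteq> G'" using G'e hu(1) wm dm by auto
        then have "Min {a..d} = Min G' \<or> Max {a..d} = Max G'" using X GJ G'(1) by auto
        then show False using MM \<open>Min G' \<le> u\<close> \<open>w \<le> Max G'\<close> hu(1) wm dm by auto
      qed
      have "R\<^sup>+\<^sup>+ y w \<Longrightarrow> w < a" for w
      proof (induction rule: tranclp_induct)
        case (base w)
        then show ?case using stepw[of y w] ya Riy by (meson tranclp.r_into_trancl tranclp_into_tranclp2)
      next
        case (step w w')
        have "R\<^sup>+\<^sup>+ i w'" using Riy step(1,2) by (meson tranclp.trancl_into_trancl tranclp_into_tranclp2)
        then show ?case using stepw[of w w'] step by blast
      qed
      then show False using Ryj aj by fastforce
    qed
  qed
  define B where "B = flip A j i"
  have Bdef: "\<And>G. B G = (if A G = j \<and> i \<in> G then i else A G)" unfolding B_def flip_def by simp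
  have orB: "orientation \<I> B" unfolding orientation_def using orA Bdef by auto
  define RB where "RB = arc \<I> B"
  have RBR: "R x y" if hx: "RB x y" "y \<noteq> i" for x y
  proof -
    obtain G where "G \<in> \<I>" "x \<in> G" "B G = y" "x \<noteq> y" using hx(1) unfolding RB_def arc_def by blast
    then show ?thesis using hx(2) Bdef[of G] unfolding R_def arc_def by (auto split: if_splits)
  qed
  define Ts where "Ts v \<longleftrightarrow> R\<^sup>*\<^sup>* v j \<or> R\<^sup>*\<^sup>* v i" for v
  have inv: "RB\<^sup>+\<^sup>+ i w \<Longrightarrow> \<not> Ts w" for w
  proof (induction rule: tranclp_induct)
    case (base w)
    obtain G where G: "G \<in> \<I>" "i \<in> G" "B G = w" "i \<noteq> w" using base unfolding RB_def arc_def by blast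
    then have "A G \<noteq> j" "A G = w" using Bdef[of G] by (auto split: if_splits)
    then have Riw: "R i w" unfolding R_def arc_def using G by blast
    have "\<not> R\<^sup>*\<^sup>* w j" using good[OF G(1,2)] G \<open>A G \<noteq> j\<close> \<open>A G = w\<close> by auto
    moreover have "\<not> R\<^sup>*\<^sup>* w i" using Riw acycA by (meson tranclp_rtranclp_tranclp tranclp.r_into_trancl)
    ultimately show ?case unfolding Ts_def by blast
  next
    case (step w w')
    obtain G where G: "G \<in> \<I>" "w \<in> G" "B G = w'" "w \<noteq> w'" using step(2) unfolding RB_def arc_def by blast
    show ?case
    proof (cases "A G = j \<and> i \<in> G")
      case True
      then have "R\<^sup>*\<^sup>* w j"
      proof (cases "w = j")
        case False then have "R w j" using True G unfolding R_def arc_def by blast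
        then show ?thesis by simp
      qed simp
      then show ?thesis using step(3) unfolding Ts_def by blast
    next
      case False
      then have "R w w'" using G Bdef[of G] unfolding R_def arc_def by auto
      then show ?thesis using step(3) unfolding Ts_def by (meson converse_rtranclp_into_rtranclp)
    qed
  qed
  have noi: "\<not> RB\<^sup>+\<^sup>+ i i" using inv unfolding Ts_def by blast
  have nocyc: "\<not> RB\<^sup>+\<^sup>+ x x" for x
  proof
    assume cyc: "RB\<^sup>+\<^sup>+ x x"
    have P: "RB\<^sup>+\<^sup>+ x y \<Longrightarrow> R\<^sup>+\<^sup>+ x y \<or> (RB\<^sup>*\<^sup>* x i \<and> RB\<^sup>*\<^sup>* i y)" for y
    proof (induction rule: tranclp_induct)
      case (base y)
      then show ?case using RBR by (cases "y = i") auto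
    next
      case (step y z)
      show ?case
      proof (cases "z = i")
        case True
        then show ?thesis using step(1,2) by (metis rtranclp.rtrancl_refl tranclp.trancl_into_trancl tranclp_into_rtranclp)
      next
        case False
        then have "R y z" using RBR step(2) by blast
        then show ?thesis using step(2,3) by (meson rtranclp.rtrancl_into_rtrancl tranclp.trancl_into_trancl)
      qed
    qed
    from P[OF cyc] show False
    proof
      assume "R\<^sup>+\<^sup>+ x x" then show False using acycA by blast
    next
      assume "RB\<^sup>*\<^sup>* x i \<and> RB\<^sup>*\<^sup>* i x"
      then have "RB\<^sup>+\<^sup>+ i i" using cyc by (meson rtranclp_tranclp_tranclp tranclp_rtranclp_tranclp)
      then show False using noi by blast
    qed
  qed
  have "acyclic_orientation \<I> B" using no_cycle_acyc[OF orB] nocyc unfolding RB_def by blast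
  moreover have "Min J \<le> i" using ai a_def by simp
  moreover have "i \<le> Max {Max I | I. I \<in> \<I> \<and> Min I = Min J \<and> Max I < A J}"
    using ai unfolding m_def M_def a_def j_def by simp
  ultimately show ?thesis unfolding B_def j_def by blast
qed

end
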